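(* Let $y:[t_0,\infty)\to[0,\infty)$ be a nondecreasing, nonnegative, differentiable function that is not identically zero, where $t_0>1$ is fixed. Let $0\le\delta<\tfrac45$. If there are constants $C_3,C_4>0$ such that $$y(t)\le C_3t^{\delta}y'(t)+C_4t^{\frac{5\delta-1}{2}}[y'(t)]^{\frac32}\quad\text{for all }t\ge t_0,$$ then $$\liminf_{t\to+\infty}t^{5\delta-4}y(t)>0.$$ *)

theory Defs
  imports "HOL-Analysis.Analysis"
begin

end

theory Submission
  imports Defs
begin

lemma key_alg:
  fixes t yt u d b C3 C4 :: real
  assumes t: "t > 1" and yt: "yt > 0" and u: "0 \<le> u" "u \<le> b * yt / t" and b: "b > 0"
    and C4: "C4 > 0"
    and ineq: "yt \<le> C3 * t powr d * u + C4 * t powr ((5*d - 1)/2) * u powr (3/2)"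
    and bd: "d = (4 - b) / 5"
    and A: "b * C3 * t powr (d - 1) < 1/2"
    and B: "C4 * b powr (3/2) * sqrt (t powr (-b) * yt) \<le> 1/2"
    and C3: "C3 > 0"
  shows False
proof -
  have h1: "C3 * t powr d * u \<le> C3 * t powr d * (b * yt / t)"
    using u C3 by (intro mult_left_mono) auto
  have h1': "C3 * t powr d * (b * yt / t) = yt * (b * C3 * t powr (d - 1))"
    using t by (simp add: powr_diff field_simps)
  have h2: "u powr (3/2) \<le> (b * yt / t) powr (3/2)"
    using u by (intro powr_mono2) auto
  have e1: "(b * yt / t) powr (3/2) = b powr (3/2) * yt powr (3/2) / t powr (3/2)"
    using b yt t by (simp add: powr_mult powr_divide)
  have e2: "yt powr (3/2) = yt * sqrt yt"
  proof -
    have "yt powr (3/2) = yt powr (1 + 1/2)" by simp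
    also have "\<dots> = yt * yt powr (1/2)" using yt by (simp only: powr_add powr_one_gt_zero_iff) simp
    finally show ?thesis using yt by (simp add: powr_half_sqrt)
  qed
  have e3: "t powr ((5*d - 1)/2) / t powr (3/2) = sqrt (t powr (-b))"
  proof -
    have "t powr ((5*d - 1)/2) / t powr (3/2) = t powr ((-b)/2)"
    proof -
      have "(5*d - 1)/2 - 3/2 = (-b)/2" using bd by (simp add: field_simps)
      thus ?thesis using t by (simp add: powr_diff[symmetric])
    qed
    also have "\<dots> = (t powr (-b)) powr (1/2)" using t by (simp add: powr_powr)
    also have "\<dots> = sqrt (t powr (-b))" using t by (simp add: powr_half_sqrt)
    finally show ?thesis .
  qed
  have "C4 * t powr ((5*d - 1)/2) * u powr (3/2) \<le> C4 * t powr ((5*d - 1)/2) * (b * yt / t) powr (3/2)"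
    using h2 C4 by (intro mult_left_mono) auto
  also have "\<dots> = yt * (C4 * b powr (3/2) * (sqrt yt * (t powr ((5*d - 1)/2) / t powr (3/2))))"
    using e1 e2 by (simp add: field_simps)
  also have "\<dots> = yt * (C4 * b powr (3/2) * sqrt (t powr (-b) * yt))"
    using e3 by (simp add: real_sqrt_mult mult.commute)
  finally have h3: "C4 * t powr ((5*d - 1)/2) * u powr (3/2) \<le> yt * (C4 * b powr (3/2) * sqrt (t powr (-b) * yt))" .
  have "yt * (b * C3 * t powr (d - 1)) < yt * (1/2)" using A yt by simp
  moreover have "yt * (C4 * b powr (3/2) * sqrt (t powr (-b) * yt)) \<le> yt * (1/2)"
    using B yt by (intro mult_left_mono) auto
  ultimately show False using ineq h1 h1' h3 by linarith
qed


theorem lemma2p2: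
  fixes y y' :: "real \<Rightarrow> real" and t0 \<delta> C3 C4 :: real
  assumes "t0 > 1"
    and deriv: "\<And>t. t \<ge> t0 \<Longrightarrow> (y has_real_derivative y' t) (at t within {t0..})"
    and mono: "mono_on {t0..} y"
    and nonneg: "\<And>t. t \<ge> t0 \<Longrightarrow> y t \<ge> 0"
    and nonzero: "\<exists>t\<ge>t0. y t \<noteq> 0"
    and "0 \<le> \<delta>" and "\<delta> < 4/5"
    and "C3 > 0" and "C4 > 0"
    and ineq: "\<And>t. t \<ge> t0 \<Longrightarrow>
        y t \<le> C3 * t powr \<delta> * y' t + C4 * t powr ((5*\<delta> - 1)/2) * (y' t) powr (3/2)"
  shows "Liminf at_top (\<lambda>t. ereal (t powr (5*\<delta> - 4) * y t)) > 0"
proof -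
  obtain t1 where t1: "t1 \<ge> t0" "y t1 \<noteq> 0" using nonzero by blast
  have yt1: "y t1 > 0" using nonneg[OF t1(1)] t1(2) by linarith
  have ypos: "y t > 0" if "t \<ge> t1" for t
  proof -
    have "y t1 \<le> y t" using mono t1(1) that by (intro mono_onD[OF mono]) auto
    thus ?thesis using yt1 by linarith
  qed
  define b where "b = 4 - 5*\<delta>"
  have b: "b > 0" using \<open>\<delta> < 4/5\<close> by (simp add: b_def)
  have bd: "\<delta> = (4 - b)/5" by (simp add: b_def)
  have DER: "(y has_real_derivative y' t) (at t)" if "t > t0" for t
  proof -
    have d1: "(y has_real_derivative y' t) (at t within {t0..})" using deriv that by simp
    have d2: "(y has_real_derivative y' t) (at t within {t0<..})"
      by (rule has_field_derivative_subset[OF d1]) auto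
    have "at t within {t0<..} = at t" by (rule at_within_open) (use that in auto)
    thus ?thesis using d2 by simp
  qed
  have y'nn: "y' t \<ge> 0" if tt0: "t > t0" for t
  proof (rule ccontr)
    assume "\<not> y' t \<ge> 0"
    then obtain d where d: "d > 0" "\<forall>h>0. h < d \<longrightarrow> y t > y (t + h)"
      using DERIV_neg_dec_right[OF DER[OF tt0]] by force
    have "y t > y (t + d/2)" using d by auto
    moreover have "y t \<le> y (t + d/2)" using tt0 d by (intro mono_onD[OF mono]) auto
    ultimately show False by linarith
  qed
  define \<epsilon> where "\<epsilon> = (1/(2*C4*b powr (3/2)))^2"
  have eps: "\<epsilon> > 0" using b \<open>C4 > 0\<close> by (simp add: \<epsilon>_def)
  have sqeps: "C4 * b powr (3/2) * sqrt \<epsilon> = 1/2"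
    using b \<open>C4 > 0\<close> by (simp add: \<epsilon>_def real_sqrt_divide)
  have "((\<lambda>t. t powr (\<delta> - 1)) \<longlongrightarrow> 0) at_top"
    using \<open>\<delta> < 4/5\<close> by (intro tendsto_neg_powr filterlim_ident) auto
  hence "((\<lambda>t. b * C3 * t powr (\<delta> - 1)) \<longlongrightarrow> b * C3 * 0) at_top"
    by (intro tendsto_mult tendsto_const)
  hence "eventually (\<lambda>t. b * C3 * t powr (\<delta> - 1) < 1/2) at_top"
    by (intro order_tendstoD) auto
  then obtain T0 where T0: "\<And>t. t \<ge> T0 \<Longrightarrow> b * C3 * t powr (\<delta> - 1) < 1/2"
    by (auto simp: eventually_at_top_linorder)
  define T where "T = max (max t1 (t0+1)) T0"
  have T: "T \<ge> t1" "T > t0" "T \<ge> T0" by (auto simp: T_def)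
  define v where "v t = t powr (5*\<delta> - 4) * y t" for t
  have key: "y' t > b * y t / t" if "t \<ge> T" "v t < \<epsilon>" for t
  proof (rule ccontr)
    assume nk: "\<not> y' t > b * y t / t"
    have tt: "t > 1" using T that \<open>t0 > 1\<close> by linarith
    have vn: "v t \<ge> 0" using ypos[of t] T that by (simp add: v_def)
    have "sqrt (v t) \<le> sqrt \<epsilon>" using that by simp
    hence "C4 * b powr (3/2) * sqrt (v t) \<le> C4 * b powr (3/2) * sqrt \<epsilon>"
      using \<open>C4 > 0\<close> b by (intro mult_left_mono) auto
    hence B: "C4 * b powr (3/2) * sqrt (t powr (-b) * y t) \<le> 1/2"
      using sqeps by (simp add: v_def b_def)
    show False
      by (rule key_alg[OF tt ypos[of t] y'nn[of t] _ b \<open>C4 > 0\<close> ineq[of t] bd T0[of t] B \<open>C3 > 0\<close>])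
         (use nk that T in auto)
  qed
  have vder: "(v has_real_derivative ((5*\<delta> - 4) * x powr (5*\<delta> - 4 - 1) * y x + x powr (5*\<delta> - 4) * y' x)) (at x)"
    if "x > t0" for x
  proof -
    have "x > 0" using that \<open>t0 > 1\<close> by linarith
    have "((\<lambda>x. x powr (5*\<delta> - 4)) has_real_derivative (5*\<delta> - 4) * x powr (5*\<delta> - 4 - 1)) (at x)"
      using \<open>x > 0\<close> by (rule has_real_derivative_powr)
    from DERIV_mult[OF this DER[OF that]] show ?thesis unfolding v_def by (simp add: mult.commute)
  qed
  have vpos: "v x > 0" if "x > t0" "x \<ge> T" for x
    using ypos[of x] T that \<open>t0 > 1\<close> by (simp add: v_def)
  have vinc: "\<exists>z. (v has_real_derivative z) (at x) \<and> z > 0" if "x \<ge> T" "v x < \<epsilon>" for x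
  proof -
    have x0: "x > t0" "x > 0" using that T \<open>t0 > 1\<close> by linarith+
    have "x powr (5*\<delta> - 4 - 1) = x powr (5*\<delta> - 4) / x"
    proof -
      have "x powr (5*\<delta> - 4 - 1) = x powr (5*\<delta> - 4) / x powr 1" by (rule powr_diff)
      thus ?thesis using x0 by simp
    qed
    hence "(5*\<delta> - 4) * x powr (5*\<delta> - 4 - 1) * y x + x powr (5*\<delta> - 4) * y' x
          = x powr (5*\<delta> - 4) * (y' x - b * y x / x)"
    proof -
      have g: "(5*\<delta> - 4) * (P / x) * Y + P * Y' = P * (Y' - (4 - 5*\<delta>) * Y / x)" for P Y Y' :: real
        by (simp add: algebra_simps diff_divide_distrib)
      show ?thesis unfolding \<open>x powr (5*\<delta> - 4 - 1) = x powr (5*\<delta> - 4) / x\<close> b_def by (rule g)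
    qed
    moreover have "x powr (5*\<delta> - 4) * (y' x - b * y x / x) > 0"
      using key[OF that] x0 by simp
    ultimately show ?thesis using vder[OF x0(1)] by metis
  qed
  have vcont: "continuous_on {a..c} v" if "a \<ge> T" for a c
    by (rule DERIV_continuous_on[where D = "\<lambda>x. (5*\<delta> - 4) * x powr (5*\<delta> - 4 - 1) * y x + x powr (5*\<delta> - 4) * y' x"])
       (use vder T that in \<open>auto intro: has_field_derivative_at_within\<close>)
  define m where "m = min \<epsilon> (v T)"
  have m: "m > 0" using eps vpos[of T] T by (simp add: m_def)
  have lower: "v s \<ge> m" if "s \<ge> T" for s
  proof (rule ccontr)
    assume vs: "\<not> v s \<ge> m"
    hence sT: "s > T" using that by (cases "s = T") (auto simp: m_def)
    define S where "S = {T..s} \<inter> v -` {m..}"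
    have Sne: "T \<in> S" using sT by (auto simp: S_def m_def)
    have Scl: "closed S" unfolding S_def
      by (rule continuous_closed_preimage[OF vcont]) auto
    have Sbd: "bdd_above S" by (auto simp: S_def bdd_above_def)
    define \<tau> where "\<tau> = Sup S"
    have tS: "\<tau> \<in> S" unfolding \<tau>_def using closed_contains_Sup[OF _ Sbd Scl] Sne by auto
    have tT: "\<tau> \<ge> T" "\<tau> \<le> s" "v \<tau> \<ge> m" using tS by (auto simp: S_def)
    have ts: "\<tau> < s" using tT vs by (cases "\<tau> = s") auto
    have small: "v x < m" if "\<tau> < x" "x \<le> s" for x
    proof (rule ccontr)
      assume "\<not> v x < m"
      hence "x \<in> S" using that tT by (auto simp: S_def)
      hence "x \<le> \<tau>" unfolding \<tau>_def by (rule cSup_upper[OF _ Sbd])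
      thus False using that by linarith
    qed
    have "v \<tau> < v s"
    proof (rule DERIV_pos_imp_increasing_open[OF ts])
      fix x assume "\<tau> < x" "x < s"
      thus "\<exists>z. (v has_real_derivative z) (at x) \<and> z > 0"
        using small[of x] tT by (intro vinc) (auto simp: m_def)
    next
      show "continuous_on {\<tau>..s} v" using tT by (intro vcont)
    qed
    thus False using tT vs by linarith
  qed
  have "ereal m \<le> Liminf at_top (\<lambda>t. ereal (t powr (5*\<delta> - 4) * y t))"
    by (rule Liminf_bounded)
       (use lower in \<open>auto simp: eventually_at_top_linorder v_def intro!: exI[of _ T]\<close>)
  thus ?thesis using m by (simp add: less_le_trans[rotated])
qed

end
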